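(* Suppose the market satisfies the finite-utility condition and $u$ is a CRRA utility of the form given in the context. Then for every admissible investment-consumption strategy $(\gamma,\alpha)$, $$\limsup_{\epsilon\to0}\mathbb E\Big(\int_{T^*-\epsilon}^{T^*}u(\gamma_t)\,\mathrm dt\Big)\le0.$$
   Context: Financial market containing a riskless asset with rate $r$ (e.g. the Black--Scholes--Merton market with stock $\mathrm dS_t=S_t(\mu\,\mathrm dt+\sigma\,\mathrm dW_t)$). Time set $\mathcal T$ is either a discrete grid with counting measure or an interval with Lebesgue measure, written $\mathrm dt$. An investment-consumption strategy $(\gamma,\alpha)$ consists of a non-negative progressively measurable consumption process $\gamma$ withdrawn from a fund and investment proportions $\alpha$; it is admissible if the fund value stays nonnegative. $u$ is CRRA up to affine transformation: $u(x)=x^a+c$ if $0<a<1$, $u(x)=-x^a+c$ if $a<0$, for a constant $c$. Finite-utility condition: $\sup\mathbb E\big(u(F_T^{(0,\alpha)})\big)<\infty$, the supremum over admissible strategies with zero consumption, where $F_T$ is the fund value at the horizon $T$. $T^*=\inf\{t\in\mathcal T:\tau<t\text{ almost surely}\}$ is the (assumed finite) upper bound on longevity, $\tau$ an individual's death time. *)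

theory Defs
  imports "HOL-Probability.Probability"
begin

text \<open>CRRA utility up to affine transformation, extended-real valued so that
  \<open>u(0) = -\<infinity>\<close> when \<open>a < 0\<close>.\<close>
definition crra :: "real \<Rightarrow> real \<Rightarrow> real \<Rightarrow> ereal" where
  "crra a c x =
     (if 0 < a \<and> a < 1 then ereal (x powr a + c)
      else if a < 0 then (if 0 < x then ereal (- (x powr a) + c) else -\<infinity>)
      else undefined)"

definition eint :: "'x measure \<Rightarrow> ('x \<Rightarrow> ereal) \<Rightarrow> ereal" where
  "eint N f = enn2ereal (\<integral>\<^sup>+ x. e2ennreal (f x) \<partial>N)
            - enn2ereal (\<integral>\<^sup>+ x. e2ennreal (- f x) \<partial>N)"

definition longevity_set :: "'w measure \<Rightarrow> real \<Rightarrow> ('w \<Rightarrow> real) \<Rightarrow> real set" where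
  "longevity_set M T \<tau> = {t \<in> {0..T}. AE \<omega> in M. \<tau> \<omega> < t}"

definition longevity_bound :: "'w measure \<Rightarrow> real \<Rightarrow> ('w \<Rightarrow> real) \<Rightarrow> real" where
  "longevity_bound M T \<tau> = Inf (longevity_set M T \<tau>)"

text \<open>Abstract continuous-time market on \<open>[0,T]\<close> with riskless rate \<open>r\<close>.
  \<open>Adm\<close> is the set of admissible strategies \<open>(\<gamma>, \<alpha>)\<close>, \<open>F \<gamma> \<alpha> t \<omega>\<close> the fund value.
  Riskless asset: the consumption stream can instead be kept in the riskless asset,
  giving an admissible zero-consumption strategy with terminal value
  \<open>F_T + \<integral>_0^T e^{r(T-t)} \<gamma>_t dt\<close>.\<close>
definition market :: "'w measure \<Rightarrow> real \<Rightarrow> real \<Rightarrow> ((real \<Rightarrow> 'w \<Rightarrow> real) \<times> 'a) set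
     \<Rightarrow> ((real \<Rightarrow> 'w \<Rightarrow> real) \<Rightarrow> 'a \<Rightarrow> real \<Rightarrow> 'w \<Rightarrow> real) \<Rightarrow> bool" where
  "market M T r Adm F \<longleftrightarrow>
     (\<forall>(\<gamma>, \<alpha>) \<in> Adm.
        (\<forall>t. \<forall>\<omega> \<in> space M. 0 \<le> \<gamma> t \<omega>)
      \<and> (\<lambda>(t, \<omega>). \<gamma> t \<omega>) \<in> borel_measurable (lborel \<Otimes>\<^sub>M M)
      \<and> (\<forall>t \<in> {0..T}. \<forall>\<omega> \<in> space M. 0 \<le> F \<gamma> \<alpha> t \<omega>)
      \<and> F \<gamma> \<alpha> T \<in> borel_measurable M)
   \<and> (\<forall>(\<gamma>, \<alpha>) \<in> Adm. \<exists>\<alpha>'. ((\<lambda>_ _. 0), \<alpha>') \<in> Adm \<and>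
        (AE \<omega> in M. ennreal (F (\<lambda>_ _. 0) \<alpha>' T \<omega>)
            = ennreal (F \<gamma> \<alpha> T \<omega>)
              + (\<integral>\<^sup>+ t \<in> {0..T}. ennreal (exp (r * (T - t)) * \<gamma> t \<omega>) \<partial>lborel)))"

definition finite_utility :: "'w measure \<Rightarrow> real \<Rightarrow> ((real \<Rightarrow> 'w \<Rightarrow> real) \<times> 'a) set
     \<Rightarrow> ((real \<Rightarrow> 'w \<Rightarrow> real) \<Rightarrow> 'a \<Rightarrow> real \<Rightarrow> 'w \<Rightarrow> real) \<Rightarrow> (real \<Rightarrow> ereal) \<Rightarrow> bool" where
  "finite_utility M T Adm F u \<longleftrightarrow>
     (SUP \<alpha> \<in> {\<alpha>. ((\<lambda>_ _. 0), \<alpha>) \<in> Adm}. eint M (\<lambda>\<omega>. u (F (\<lambda>_ _. 0) \<alpha> T \<omega>))) < \<infinity>"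

end

theory Submission
  imports Defs
begin

lemma ereal_diff_le_self': "0 \<le> (y::ereal) \<Longrightarrow> x - y \<le> x"
  by (cases x; cases y) auto

lemma eint_le: "eint N f \<le> enn2ereal (\<integral>\<^sup>+ x. e2ennreal (f x) \<partial>N)"
  unfolding eint_def by (rule ereal_diff_le_self') simp

lemma limsup_le0:
  fixes f :: "real \<Rightarrow> ereal"
  assumes "\<And>e. 0 < e \<Longrightarrow> e < 1 \<Longrightarrow> f e \<le> ereal (B e)" "(B \<longlongrightarrow> 0) (at_right 0)"
  shows "Limsup (at_right 0) f \<le> 0"
proof -
  have "eventually (\<lambda>e. f e \<le> ereal (B e)) (at_right (0::real))"
    unfolding eventually_at_right_field by (rule exI[of _ 1]) (auto intro: assms)
  then have "Limsup (at_right 0) f \<le> Limsup (at_right 0) (\<lambda>e. ereal (B e))" by (rule Limsup_mono)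
  also have "\<dots> = ereal 0"
    by (rule lim_imp_Limsup) (use assms(2) in \<open>auto simp: tendsto_ereal\<close>)
  finally show ?thesis by (simp add: zero_ereal_def)
qed

lemma powr_tangent:
  fixes x y a :: real
  assumes "0 \<le> x" "0 < y" "0 < a" "a < 1"
  shows "x powr a \<le> y powr a + y powr (a - 1) * x"
proof (cases "x \<le> y")
  case True
  then have "x powr a \<le> y powr a" using assms by (intro powr_mono2) auto
  moreover have "0 \<le> y powr (a - 1) * x" using assms by simp
  ultimately show ?thesis by linarith
next
  case False
  then have "x powr (a-1) \<le> y powr (a-1)" using assms by (intro powr_mono2') auto
  then have "x powr (a-1) * x \<le> y powr (a-1) * x" using assms by (simp add: mult_right_mono)
  moreover have "x powr (a-1) * x = x powr a" using False assms
    by (simp add: powr_diff field_simps)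
  moreover have "0 \<le> y powr a" by simp
  ultimately show ?thesis by linarith
qed

lemma powr_opt:
  fixes s e a :: real
  assumes "0 \<le> s" "0 < e" "0 < a" "a < 1"
  defines "y \<equiv> max (s / e) 1"
  shows "y powr a * e + y powr (a - 1) * s \<le> 2 * e powr (1 - a) * s powr a + 2 * e"
proof -
  have y0: "0 < y" unfolding y_def by simp
  have "s \<le> y * e" unfolding y_def using assms by (auto simp: field_simps max_def)
  then have "y powr (a - 1) * s \<le> y powr (a - 1) * (y * e)" by (simp add: mult_left_mono)
  also have "\<dots> = y powr a * e" using y0 by (simp add: powr_diff field_simps)
  finally have 1: "y powr (a - 1) * s \<le> y powr a * e" .
  have 2: "y powr a \<le> (s/e) powr a + 1"
  proof (cases "s / e \<le> 1")
    case True then show ?thesis unfolding y_def by simp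
  next
    case False then show ?thesis unfolding y_def by simp
  qed
  have 3: "(s/e) powr a * e = e powr (1 - a) * s powr a"
    using assms by (simp add: powr_divide powr_diff field_simps)
  have "y powr a * e \<le> ((s/e) powr a + 1) * e" using 2 assms by (simp add: mult_right_mono)
  then show ?thesis using 1 3 by (simp add: field_simps)
qed

lemma emeasure_J:
  assumes "0 < e" "J \<subseteq> {L - e .. L}" "J \<in> sets lborel"
  shows "emeasure lborel J \<le> ennreal e"
proof -
  have "emeasure lborel J \<le> emeasure lborel {L - e .. L}" using assms by (intro emeasure_mono) auto
  also have "\<dots> = ennreal e" using assms by simp
  finally show ?thesis .
qed

lemma inner_pos:
  fixes g :: "real \<Rightarrow> real"
  assumes a: "0 < a" "a < 1" and e: "0 < e" and g: "g \<in> borel_measurable lborel" "\<And>t. 0 \<le> g t"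
    and J: "J \<in> sets lborel" "J \<subseteq> {L - e .. L}"
    and S: "(\<integral>\<^sup>+ t. ennreal (g t) * indicator J t \<partial>lborel) = ennreal s" "0 \<le> s"
  shows "(\<integral>\<^sup>+ t. ennreal (g t powr a) * indicator J t \<partial>lborel)
           \<le> ennreal (2 * e powr (1 - a) * s powr a + 2 * e)"
proof -
  define y where "y = max (s / e) 1"
  have y0: "0 < y" unfolding y_def by simp
  have "(\<integral>\<^sup>+ t. ennreal (g t powr a) * indicator J t \<partial>lborel)
     \<le> (\<integral>\<^sup>+ t. ennreal (y powr a) * indicator J t + ennreal (y powr (a - 1)) * (ennreal (g t) * indicator J t) \<partial>lborel)"
  proof (rule nn_integral_mono)
    fix t
    have "ennreal (g t powr a) \<le> ennreal (y powr a + y powr (a - 1) * g t)"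
      using powr_tangent[OF g(2) y0 a] by (rule ennreal_leI)
    also have "\<dots> = ennreal (y powr a) + ennreal (y powr (a - 1)) * ennreal (g t)"
      using g(2)[of t] by (simp add: ennreal_plus ennreal_mult)
    finally show "ennreal (g t powr a) * indicator J t \<le> ennreal (y powr a) * indicator J t + ennreal (y powr (a - 1)) * (ennreal (g t) * indicator J t)"
      by (auto simp: indicator_def)
  qed
  also have "\<dots> = ennreal (y powr a) * emeasure lborel J + ennreal (y powr (a - 1)) * ennreal s"
    using J g S by (subst nn_integral_add) (auto simp: nn_integral_cmult nn_integral_cmult_indicator)
  also have "\<dots> \<le> ennreal (y powr a) * ennreal e + ennreal (y powr (a - 1)) * ennreal s"
    using emeasure_J[OF e J(2) J(1)] by (intro add_mono mult_left_mono) auto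
  also have "\<dots> = ennreal (y powr a * e + y powr (a - 1) * s)"
    using e S by (simp add: ennreal_plus ennreal_mult)
  also have "\<dots> \<le> ennreal (2 * e powr (1 - a) * s powr a + 2 * e)"
    unfolding y_def by (rule ennreal_leI, rule powr_opt) (use a e S in auto)
  finally show ?thesis .
qed

lemma e2_crra_pos:
  assumes "0 < a" "a < 1"
  shows "e2ennreal (crra a c x) \<le> ennreal (x powr a) + ennreal (max c 0)"
proof -
  have "e2ennreal (crra a c x) = ennreal (x powr a + c)" using assms by (simp add: crra_def)
  also have "\<dots> \<le> ennreal (x powr a + max c 0)" by (rule ennreal_leI) auto
  also have "\<dots> = ennreal (x powr a) + ennreal (max c 0)" by (simp add: ennreal_plus)
  finally show ?thesis .
qed

lemma e2_crra_neg:
  assumes "a < 0"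
  shows "e2ennreal (crra a c x) \<le> ennreal (max c 0)"
proof (cases "0 < x")
  case True
  then have "e2ennreal (crra a c x) = ennreal (- (x powr a) + c)" using assms by (simp add: crra_def)
  also have "\<dots> \<le> ennreal (max c 0)" proof (intro ennreal_leI)
    have h: "0 \<le> x powr a" by simp
    have "- (x powr a) + c \<le> c" using h by linarith
    moreover have "c \<le> max c 0" by simp
    ultimately show "- (x powr a) + c \<le> max c 0" by linarith
  qed
  finally show ?thesis .
next
  case False
  then show ?thesis using assms by (simp add: crra_def e2ennreal_neg)
qed

theorem mainTheorem12:
  fixes M :: "'w measure" and \<tau> :: "'w \<Rightarrow> real" and T r a c :: real
    and Adm :: "((real \<Rightarrow> 'w \<Rightarrow> real) \<times> 'a) set"
    and F :: "(real \<Rightarrow> 'w \<Rightarrow> real) \<Rightarrow> 'a \<Rightarrow> real \<Rightarrow> 'w \<Rightarrow> real"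
    and \<gamma> :: "real \<Rightarrow> 'w \<Rightarrow> real" and \<alpha> :: 'a
  assumes "prob_space M"
    and "market M T r Adm F"
    and "(0 < a \<and> a < 1) \<or> a < 0"
    and "finite_utility M T Adm F (crra a c)"
    and "\<tau> \<in> borel_measurable M" and "\<forall>\<omega> \<in> space M. 0 \<le> \<tau> \<omega>"
    and "longevity_set M T \<tau> \<noteq> {}"
    and "(\<gamma>, \<alpha>) \<in> Adm"
  shows "Limsup (at_right 0)
           (\<lambda>\<epsilon>. eint M (\<lambda>\<omega>. eint (restrict_space lborel
                     ({longevity_bound M T \<tau> - \<epsilon> .. longevity_bound M T \<tau>} \<inter> {0..T}))
                   (\<lambda>t. crra a c (\<gamma> t \<omega>)))) \<le> 0"
proof -
  interpret P: prob_space M by fact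
  have T0: "0 \<le> T" using assms(7) unfolding longevity_set_def by auto
  define L where "L = longevity_bound M T \<tau>"
  define J where "J e = {L - e .. L} \<inter> {0..T}" for e
  have Jsets: "J e \<in> sets lborel" for e unfolding J_def by auto
  have Jsub: "J e \<subseteq> {L - e .. L}" for e unfolding J_def by auto
  have Jsub2: "J e \<subseteq> {0 .. T}" for e unfolding J_def by auto
  define P where "P e \<omega> = (\<integral>\<^sup>+ t. e2ennreal (crra a c (\<gamma> t \<omega>)) * indicator (J e) t \<partial>lborel)" for e \<omega>
  have Peq: "(\<integral>\<^sup>+ t. e2ennreal (crra a c (\<gamma> t \<omega>)) \<partial>restrict_space lborel (J e)) = P e \<omega>" for e \<omega>
    unfolding P_def using Jsets by (subst nn_integral_restrict_space) auto
  from assms(2,8) have adm: "\<forall>t. \<forall>\<omega> \<in> space M. 0 \<le> \<gamma> t \<omega>"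
      "(\<lambda>(t, \<omega>). \<gamma> t \<omega>) \<in> borel_measurable (lborel \<Otimes>\<^sub>M M)"
      "\<forall>t \<in> {0..T}. \<forall>\<omega> \<in> space M. 0 \<le> F \<gamma> \<alpha> t \<omega>"
    unfolding market_def by fast+
  from assms(2,8) obtain \<alpha>' where a': "((\<lambda>_ _. 0), \<alpha>') \<in> Adm"
    "AE \<omega> in M. ennreal (F (\<lambda>_ _. 0) \<alpha>' T \<omega>)
            = ennreal (F \<gamma> \<alpha> T \<omega>)
              + (\<integral>\<^sup>+ t \<in> {0..T}. ennreal (exp (r * (T - t)) * \<gamma> t \<omega>) \<partial>lborel)"
    unfolding market_def by fast
  define Fp where "Fp \<omega> = F (\<lambda>_ _. 0) \<alpha>' T \<omega>" for \<omega>
  from assms(2) a'(1) have Fp: "Fp \<in> borel_measurable M"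
     "\<forall>t \<in> {0..T}. \<forall>\<omega> \<in> space M. 0 \<le> F (\<lambda>_ _. 0) \<alpha>' t \<omega>"
    unfolding market_def Fp_def by fast+
  have gmeas: "(\<lambda>t. \<gamma> t \<omega>) \<in> borel_measurable lborel" if "\<omega> \<in> space M" for \<omega>
    using measurable_compose[OF measurable_Pair2'[OF that] adm(2)] by simp
  have outer: "eint M (\<lambda>\<omega>. eint (restrict_space lborel (J e)) (\<lambda>t. crra a c (\<gamma> t \<omega>)))
      \<le> enn2ereal (\<integral>\<^sup>+ \<omega>. P e \<omega> \<partial>M)" for e
  proof -
    have "eint M (\<lambda>\<omega>. eint (restrict_space lborel (J e)) (\<lambda>t. crra a c (\<gamma> t \<omega>)))
       \<le> enn2ereal (\<integral>\<^sup>+ \<omega>. e2ennreal (eint (restrict_space lborel (J e)) (\<lambda>t. crra a c (\<gamma> t \<omega>))) \<partial>M)"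
      by (rule eint_le)
    also have "\<dots> \<le> enn2ereal (\<integral>\<^sup>+ \<omega>. P e \<omega> \<partial>M)"
    proof (subst less_eq_ennreal.rep_eq[symmetric], rule nn_integral_mono)
      fix \<omega>
      show "e2ennreal (eint (restrict_space lborel (J e)) (\<lambda>t. crra a c (\<gamma> t \<omega>))) \<le> P e \<omega>"
        using e2ennreal_mono[OF eint_le[of "restrict_space lborel (J e)" "\<lambda>t. crra a c (\<gamma> t \<omega>)"]]
        by (simp add: Peq)
    qed
    finally show ?thesis .
  qed
  have Pint_bound: "eint M (\<lambda>\<omega>. eint (restrict_space lborel (J e)) (\<lambda>t. crra a c (\<gamma> t \<omega>))) \<le> ereal b"
    if "(\<integral>\<^sup>+ \<omega>. P e \<omega> \<partial>M) \<le> ennreal b" "0 \<le> b" for e b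
  proof -
    have "enn2ereal (\<integral>\<^sup>+ \<omega>. P e \<omega> \<partial>M) \<le> enn2ereal (ennreal b)"
      using that(1) by (simp add: less_eq_ennreal.rep_eq[symmetric])
    then show ?thesis using outer[of e] that(2) by simp
  qed
  have goal: "Limsup (at_right 0) (\<lambda>e. eint M (\<lambda>\<omega>. eint (restrict_space lborel (J e)) (\<lambda>t. crra a c (\<gamma> t \<omega>)))) \<le> 0"
  proof (cases "a < 0")
    case True
    show ?thesis
    proof (rule limsup_le0)
      fix e :: real assume e: "0 < e" "e < 1"
      have "(\<integral>\<^sup>+ \<omega>. P e \<omega> \<partial>M) \<le> (\<integral>\<^sup>+ \<omega>. ennreal (max c 0 * e) \<partial>M)"
      proof (rule nn_integral_mono)
        fix \<omega>
        have "P e \<omega> \<le> (\<integral>\<^sup>+ t. ennreal (max c 0) * indicator (J e) t \<partial>lborel)"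
          unfolding P_def using e2_crra_neg[OF True]
          by (intro nn_integral_mono) (auto simp: indicator_def)
        also have "\<dots> = ennreal (max c 0) * emeasure lborel (J e)"
          using Jsets by (simp add: nn_integral_cmult_indicator)
        also have "\<dots> \<le> ennreal (max c 0) * ennreal e"
          using emeasure_J[OF e(1) Jsub Jsets] by (intro mult_left_mono) auto
        also have "\<dots> = ennreal (max c 0 * e)" using e by (simp add: ennreal_mult)
        finally show "P e \<omega> \<le> ennreal (max c 0 * e)" .
      qed
      also have "\<dots> = ennreal (max c 0 * e)" by (simp add: P.emeasure_space_1)
      finally show "eint M (\<lambda>\<omega>. eint (restrict_space lborel (J e)) (\<lambda>t. crra a c (\<gamma> t \<omega>))) \<le> ereal (max c 0 * e)"
        using e by (intro Pint_bound) auto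
    next
      show "((\<lambda>e. max c 0 * e) \<longlongrightarrow> 0) (at_right 0)"
        by (rule tendsto_eq_intros) (auto intro!: tendsto_eq_intros)
    qed
  next
    case False
    then have a: "0 < a" "a < 1" using assms(3) by auto
    note Fp(1)[measurable]
    define G where "G \<omega> = ennreal (Fp \<omega> powr a + c)" for \<omega>
    have Gm: "G \<in> borel_measurable M" unfolding G_def by measurable
    have crraFp: "crra a c (Fp \<omega>) = ereal (Fp \<omega> powr a + c)" for \<omega>
      using a by (simp add: crra_def)
    have "eint M (\<lambda>\<omega>. crra a c (Fp \<omega>)) \<le> (SUP \<alpha> \<in> {\<alpha>. ((\<lambda>_ _. 0), \<alpha>) \<in> Adm}. eint M (\<lambda>\<omega>. crra a c (F (\<lambda>_ _. 0) \<alpha> T \<omega>)))"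
      unfolding Fp_def using a'(1) by (intro SUP_upper) auto
    also have "\<dots> < \<infinity>" using assms(4) unfolding finite_utility_def .
    finally have eintlt: "eint M (\<lambda>\<omega>. crra a c (Fp \<omega>)) < \<infinity>" .
    have negb: "(\<integral>\<^sup>+ \<omega>. e2ennreal (- crra a c (Fp \<omega>)) \<partial>M) \<le> ennreal \<bar>c\<bar>"
    proof -
      have "(\<integral>\<^sup>+ \<omega>. e2ennreal (- crra a c (Fp \<omega>)) \<partial>M) \<le> (\<integral>\<^sup>+ \<omega>. ennreal \<bar>c\<bar> \<partial>M)"
      proof (rule nn_integral_mono)
        fix \<omega>
        have h: "0 \<le> Fp \<omega> powr a" by simp
        have "e2ennreal (- crra a c (Fp \<omega>)) = ennreal (- (Fp \<omega> powr a + c))" by (simp add: crraFp)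
        also have "\<dots> \<le> ennreal \<bar>c\<bar>" using h by (intro ennreal_leI) linarith
        finally show "e2ennreal (- crra a c (Fp \<omega>)) \<le> ennreal \<bar>c\<bar>" .
      qed
      also have "\<dots> = ennreal \<bar>c\<bar>" by (simp add: P.emeasure_space_1)
      finally show ?thesis .
    qed
    have IGfin: "(\<integral>\<^sup>+ \<omega>. G \<omega> \<partial>M) < \<top>"
    proof (rule ccontr)
      assume "\<not> ?thesis"
      then have inf: "(\<integral>\<^sup>+ \<omega>. G \<omega> \<partial>M) = \<top>" using top.not_eq_extremum by blast
      have "enn2ereal (\<integral>\<^sup>+ \<omega>. e2ennreal (- crra a c (Fp \<omega>)) \<partial>M) \<le> ereal \<bar>c\<bar>"
        using negb by (simp add: less_eq_ennreal.rep_eq)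
      then have fin: "enn2ereal (\<integral>\<^sup>+ \<omega>. e2ennreal (- crra a c (Fp \<omega>)) \<partial>M) \<noteq> \<infinity>" by auto
      have "eint M (\<lambda>\<omega>. crra a c (Fp \<omega>)) = \<infinity> - enn2ereal (\<integral>\<^sup>+ \<omega>. e2ennreal (- crra a c (Fp \<omega>)) \<partial>M)"
        unfolding eint_def using inf by (simp add: crraFp G_def)
      also have "\<dots> = \<infinity>" using fin by simp
      finally show False using eintlt by simp
    qed
    then obtain Ig where Ig: "(\<integral>\<^sup>+ \<omega>. G \<omega> \<partial>M) = ennreal Ig" "0 \<le> Ig"
      using less_top_ennreal by blast
    define K where "K = exp (\<bar>r\<bar> * T)"
    have K0: "0 < K" unfolding K_def by simp
    define A where "A e = 2 * e powr (1 - a) * K powr a" for e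
    define B where "B e = A e * \<bar>c\<bar> + 2 * e + max c 0 * e" for e
    show ?thesis
    proof (rule limsup_le0)
      fix e :: real assume e: "0 < e" "e < 1"
      have A0: "0 \<le> A e" unfolding A_def by simp
      have B0: "0 \<le> B e" unfolding B_def using A0 e by simp
      have "AE \<omega> in M. P e \<omega> \<le> ennreal (A e) * G \<omega> + ennreal (B e)"
        using a'(2) AE_space
      proof eventually_elim
        case (elim \<omega>)
        define g where "g t = \<gamma> t \<omega>" for t
        note gm[measurable] = gmeas[OF elim(2), folded g_def]
        have g0: "0 \<le> g t" for t using adm(1) elim(2) unfolding g_def by auto
        have Fp0: "0 \<le> Fp \<omega>" using Fp(2) elim(2) T0 unfolding Fp_def by auto
        define S where "S = (\<integral>\<^sup>+ t. ennreal (g t) * indicator (J e) t \<partial>lborel)"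
        have "S \<le> (\<integral>\<^sup>+ t. ennreal K * (ennreal (exp (r * (T - t)) * g t) * indicator {0..T} t) \<partial>lborel)"
          unfolding S_def
        proof (rule nn_integral_mono)
          fix t
          show "ennreal (g t) * indicator (J e) t \<le> ennreal K * (ennreal (exp (r * (T - t)) * g t) * indicator {0..T} t)"
          proof (cases "t \<in> J e")
            case True
            then have t: "0 \<le> t" "t \<le> T" using Jsub2[of e] by auto
            have "0 \<le> \<bar>r\<bar> * T + r * (T - t)"
            proof -
              have "- (r * (T - t)) \<le> \<bar>r\<bar> * (T - t)" using t
                by (metis abs_ge_minus_self abs_mult abs_of_nonneg diff_ge_0_iff_ge dual_order.trans mult_minus_left order.refl)
              also have "\<dots> \<le> \<bar>r\<bar> * T" using t by (intro mult_left_mono) auto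
              finally show ?thesis by linarith
            qed
            then have "1 \<le> K * exp (r * (T - t))" unfolding K_def by (simp add: exp_add[symmetric])
            then have "g t \<le> K * exp (r * (T - t)) * g t" using g0[of t] by (simp add: mult_le_cancel_right1)
            then show ?thesis using True t K0 g0[of t] by (simp add: ennreal_mult[symmetric] mult.assoc)
          next
            case False then show ?thesis by simp
          qed
        qed
        also have "\<dots> = ennreal K * (\<integral>\<^sup>+ t \<in> {0..T}. ennreal (exp (r * (T - t)) * \<gamma> t \<omega>) \<partial>lborel)"
          unfolding g_def[symmetric] by (subst nn_integral_cmult) auto
        also have "\<dots> \<le> ennreal K * ennreal (Fp \<omega>)"
          using elim(1) unfolding Fp_def by (intro mult_left_mono) auto
        also have "\<dots> = ennreal (K * Fp \<omega>)" using K0 Fp0 by (simp add: ennreal_mult)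
        finally have SK: "S \<le> ennreal (K * Fp \<omega>)" .
        then have "S < \<top>" by (meson ennreal_less_top le_less_trans)
        then obtain s where s: "S = ennreal s" "0 \<le> s" using less_top_ennreal by blast
        have sK: "s \<le> K * Fp \<omega>" using SK s K0 Fp0 by simp
        have "P e \<omega> \<le> (\<integral>\<^sup>+ t. ennreal (g t powr a) * indicator (J e) t + ennreal (max c 0) * indicator (J e) t \<partial>lborel)"
          unfolding P_def g_def using e2_crra_pos[OF a]
          by (intro nn_integral_mono) (auto simp: indicator_def)
        also have "\<dots> = (\<integral>\<^sup>+ t. ennreal (g t powr a) * indicator (J e) t \<partial>lborel) + ennreal (max c 0) * emeasure lborel (J e)"
          using Jsets by (subst nn_integral_add) (auto simp: nn_integral_cmult_indicator)
        also have "\<dots> \<le> ennreal (2 * e powr (1 - a) * s powr a + 2 * e) + ennreal (max c 0) * ennreal e"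
          using inner_pos[OF a e(1) gm g0 Jsets Jsub s(1)[unfolded S_def] s(2)] emeasure_J[OF e(1) Jsub Jsets]
          by (intro add_mono mult_left_mono) auto
        also have "\<dots> = ennreal (2 * e powr (1 - a) * s powr a + 2 * e + max c 0 * e)"
          using e s by (simp add: ennreal_mult ennreal_plus)
        also have "\<dots> \<le> ennreal (A e * max 0 (Fp \<omega> powr a + c) + B e)"
        proof (rule ennreal_leI)
          have "s powr a \<le> (K * Fp \<omega>) powr a" using s sK by (intro powr_mono2) (use a in auto)
          also have "\<dots> = K powr a * Fp \<omega> powr a" using K0 Fp0 by (simp add: powr_mult)
          also have "\<dots> \<le> K powr a * (max 0 (Fp \<omega> powr a + c) + \<bar>c\<bar>)"
            by (intro mult_left_mono) auto
          finally have "2 * e powr (1 - a) * s powr a \<le> 2 * e powr (1 - a) * (K powr a * (max 0 (Fp \<omega> powr a + c) + \<bar>c\<bar>))"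
            by (intro mult_left_mono) auto
          then show "2 * e powr (1 - a) * s powr a + 2 * e + max c 0 * e \<le> A e * max 0 (Fp \<omega> powr a + c) + B e"
            unfolding A_def B_def by (simp add: algebra_simps)
        qed
        also have "\<dots> = ennreal (A e) * G \<omega> + ennreal (B e)"
          unfolding G_def using A0 B0 by (simp add: ennreal_mult ennreal_plus ennreal_max_0)
        finally show ?case .
      qed
      then have "(\<integral>\<^sup>+ \<omega>. P e \<omega> \<partial>M) \<le> (\<integral>\<^sup>+ \<omega>. ennreal (A e) * G \<omega> + ennreal (B e) \<partial>M)"
        by (rule nn_integral_mono_AE)
      also have "\<dots> = ennreal (A e) * ennreal Ig + ennreal (B e)"
        using Gm Ig by (subst nn_integral_add) (auto simp: nn_integral_cmult P.emeasure_space_1)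
      also have "\<dots> = ennreal (A e * Ig + B e)" using A0 B0 Ig by (simp add: ennreal_mult ennreal_plus)
      finally show "eint M (\<lambda>\<omega>. eint (restrict_space lborel (J e)) (\<lambda>t. crra a c (\<gamma> t \<omega>))) \<le> ereal (A e * Ig + B e)"
        using A0 B0 Ig by (intro Pint_bound) auto
    next
      have "((\<lambda>e. e powr (1 - a)) \<longlongrightarrow> 0) (at_right 0)"
      proof (rule tendsto_zero_powrI[where b="1 - a"])
        show "((\<lambda>e. e) \<longlongrightarrow> (0::real)) (at_right 0)" by (rule tendsto_ident_at)
        show "((\<lambda>e. 1 - a) \<longlongrightarrow> 1 - a) (at_right 0)" by (rule tendsto_const)
        show "\<forall>\<^sub>F e in at_right 0. 0 \<le> (e::real)"
          unfolding eventually_at_right_field by (rule exI[of _ 1]) auto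
        show "0 < 1 - a" using a by simp
      qed
      then have "((\<lambda>e. 2 * e powr (1 - a) * K powr a) \<longlongrightarrow> 2 * 0 * K powr a) (at_right 0)"
        by (intro tendsto_mult tendsto_const)
      then have A: "(A \<longlongrightarrow> 0) (at_right 0)" unfolding A_def by simp
      have "((\<lambda>e. A e * Ig + (A e * \<bar>c\<bar> + 2 * e + max c 0 * e)) \<longlongrightarrow> 0 * Ig + (0 * \<bar>c\<bar> + 2 * 0 + max c 0 * 0)) (at_right 0)"
        by (intro tendsto_add tendsto_mult tendsto_const A tendsto_ident_at)
      then show "((\<lambda>e. A e * Ig + B e) \<longlongrightarrow> 0) (at_right 0)" unfolding B_def by simp
    qed
  qed
  then show ?thesis unfolding J_def L_def .
qed

end
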